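(* If $\xi<\varepsilon_{\Omega+1}$ is a limit ordinal and $\theta<\Omega$, then $\theta\le(\xi[\theta])^*\le\max\{\xi^*,\theta\}$.
   Context: $\Omega$ is the first uncountable ordinal; $\varepsilon_{\Omega+1}$ the least $\varepsilon>\Omega$ with $\omega^\varepsilon=\varepsilon$. Every $0<\xi<\varepsilon_{\Omega+1}$ has a unique $\Omega$-normal form $\xi=\Omega^{\alpha}\beta+\gamma$ with $0<\beta<\Omega$, $\gamma<\Omega^{\alpha}$. Coefficients: $C(0)=\{0\}$, $C(\Omega^\alpha\beta+\gamma)=C(\alpha)\cup C(\gamma)\cup\{\beta\}$; $\xi^*=\max C(\xi)$. For $\xi<\varepsilon_{\Omega+1}$ and $\theta<\Omega$, $\xi[\theta]$ is defined recursively on $\Omega$-normal forms: $0[\theta]=1[\theta]=0$; $(\Omega^\alpha\beta+\gamma)[\theta]=\Omega^\alpha\beta+\gamma[\theta]$ if $\gamma>0$; $(\Omega^\alpha\beta)[\theta]=\Omega^\alpha\theta$ if $\beta$ is a limit; $\Omega^{\alpha+1}[\theta]=\Omega^\alpha\theta$; $(\Omega^\alpha(\beta+1))[\theta]=\Omega^\alpha\beta+(\Omega^\alpha)[\theta]$ if $\beta>0$; $\Omega^\alpha[\theta]=\Omega^{\alpha[\theta]}$ if $\alpha$ is a limit. *)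

theory Defs
  imports "HOL-Library.Countable_Set"
begin

text \<open>Countable ordinals (ordinals below Omega) are modelled by an arbitrary
well-ordered type 'a whose order type is omega_1 (uncountable, every proper
initial segment countable).\<close>

definition ozero :: "'a::wellorder" where
  "ozero = (LEAST x. True)"

definition osuc :: "'a::wellorder \<Rightarrow> 'a" where
  "osuc b = (LEAST y. b < y)"

definition oone :: "'a::wellorder" where
  "oone = osuc ozero"

definition olimit :: "'a::wellorder \<Rightarrow> bool" where
  "olimit b \<longleftrightarrow> b \<noteq> ozero \<and> \<not> (\<exists>c. b = osuc c)"

text \<open>Omega-normal forms: OZ is 0, OT al be ga is Omega^al * be + ga.
These notations (subject to onf_wf) are exactly the ordinals below eps_{Omega+1}.\<close>

datatype 'a onf = OZ | OT "'a onf" 'a "'a onf"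

fun onf_less :: "'a::wellorder onf \<Rightarrow> 'a onf \<Rightarrow> bool" where
  "onf_less OZ OZ = False"
| "onf_less OZ (OT _ _ _) = True"
| "onf_less (OT _ _ _) OZ = False"
| "onf_less (OT a b g) (OT a' b' g') =
     (onf_less a a' \<or> (a = a' \<and> (b < b' \<or> (b = b' \<and> onf_less g g'))))"

fun onf_wf :: "'a::wellorder onf \<Rightarrow> bool" where
  "onf_wf OZ = True"
| "onf_wf (OT a b g) =
     (onf_wf a \<and> onf_wf g \<and> ozero < b \<and>
      (case g of OZ \<Rightarrow> True | OT a' _ _ \<Rightarrow> onf_less a' a))"

fun onf_plus1 :: "'a::wellorder onf \<Rightarrow> 'a onf" where
  "onf_plus1 OZ = OT OZ oone OZ"
| "onf_plus1 (OT a b g) =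
     (if a = OZ then OT OZ (osuc b) OZ else OT a b (onf_plus1 g))"

definition onf_limit :: "'a::wellorder onf \<Rightarrow> bool" where
  "onf_limit xi \<longleftrightarrow> xi \<noteq> OZ \<and> \<not> (\<exists>eta. onf_wf eta \<and> xi = onf_plus1 eta)"

fun onf_coeffs :: "'a::wellorder onf \<Rightarrow> 'a set" where
  "onf_coeffs OZ = {ozero}"
| "onf_coeffs (OT a b g) = onf_coeffs a \<union> onf_coeffs g \<union> {b}"

definition onf_star :: "'a::wellorder onf \<Rightarrow> 'a" where
  "onf_star xi = Max (onf_coeffs xi)"

definition omk :: "'a::wellorder onf \<Rightarrow> 'a \<Rightarrow> 'a onf" where
  "omk a th = (if th = ozero then OZ else OT a th OZ)"

primrec onf_fs :: "'a::wellorder onf \<Rightarrow> 'a \<Rightarrow> 'a onf" where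
  "onf_fs OZ th = OZ"
| "onf_fs (OT a b g) th =
     (let pw = (if a = OZ then OZ
                else if (\<exists>a'. onf_wf a' \<and> a = onf_plus1 a')
                  then omk (THE a'. onf_wf a' \<and> a = onf_plus1 a') th
                else OT (onf_fs a th) oone OZ)
      in if g \<noteq> OZ then OT a b (onf_fs g th)
         else if olimit b then omk a th
         else if b = oone then pw
         else OT a (THE b'. b = osuc b') pw)"

end

theory Submission
  imports Defs
begin

lemma ozero_le: "ozero \<le> (x::'a::wellorder)"
  unfolding ozero_def by (rule Least_le) simp

lemma osuc_gt: "\<exists>y. b < y \<Longrightarrow> b < osuc (b::'a::wellorder)"
  unfolding osuc_def by (metis LeastI)

lemma osuc_le: "b < y \<Longrightarrow> osuc b \<le> (y::'a::wellorder)"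
  unfolding osuc_def by (rule Least_le)

lemma osuc_inj:
  assumes nm: "\<forall>b::'a::wellorder. \<exists>y. b < y" and e: "osuc b = osuc (c::'a)"
  shows "b = c"
proof (rule ccontr)
  assume "b \<noteq> c"
  then consider "b < c" | "c < b" by (meson linorder_neqE)
  then show False
  proof cases
    case 1 then have "osuc b \<le> c" by (rule osuc_le)
    moreover have "c < osuc c" using nm osuc_gt by blast
    ultimately show False using e by simp
  next
    case 2 then have "osuc c \<le> b" by (rule osuc_le)
    moreover have "b < osuc b" using nm osuc_gt by blast
    ultimately show False using e by simp
  qed
qed

lemma onf_less_OZ[simp]: "\<not> onf_less x OZ"
  by (cases x) auto

lemma coeffs_fin: "finite (onf_coeffs x)"
  by (induction x) auto

lemma coeffs_ne: "onf_coeffs x \<noteq> {}"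
  by (induction x) auto

lemma star_ge: "c \<in> onf_coeffs x \<Longrightarrow> c \<le> onf_star x"
  unfolding onf_star_def using coeffs_fin by (rule Max_ge)

lemma star_le: "(\<And>c. c \<in> onf_coeffs x \<Longrightarrow> c \<le> m) \<Longrightarrow> onf_star x \<le> m"
  unfolding onf_star_def using coeffs_fin coeffs_ne by (rule Max.boundedI)

lemma plus1_dom:
  assumes nm: "\<forall>b::'a::wellorder. \<exists>y. b < y"
  shows "onf_wf (x::'a onf) \<Longrightarrow> c \<in> onf_coeffs x \<Longrightarrow> \<exists>d\<in>onf_coeffs (onf_plus1 x). c \<le> d"
proof (induction x)
  case OZ
  then show ?case by (auto simp: ozero_le)
next
  case (OT a b g)
  show ?case
  proof (cases "a = OZ")
    case True
    then have "g = OZ" using OT.prems(1) by (cases g) auto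
    have "b < osuc b" using nm by (intro osuc_gt) blast
    then have "b \<le> osuc b" by simp
    moreover have "c \<in> {ozero, b}" using OT.prems(2) True \<open>g = OZ\<close> by auto
    moreover have "onf_plus1 (OT a b g) = OT OZ (osuc b) OZ" using True by simp
    ultimately show ?thesis by (auto simp: ozero_le)
  next
    case False
    then have eq: "onf_plus1 (OT a b g) = OT a b (onf_plus1 g)" by simp
    have wg: "onf_wf g" using OT.prems(1) by simp
    show ?thesis
    proof (cases "c \<in> onf_coeffs g")
      case True
      then obtain d where "d \<in> onf_coeffs (onf_plus1 g)" "c \<le> d" using OT.IH(2)[OF wg] by blast
      then show ?thesis unfolding eq by auto
    next
      case False
      then have "c \<in> onf_coeffs (OT a b (onf_plus1 g))" using OT.prems(2) by auto
      then show ?thesis unfolding eq by blast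
    qed
  qed
qed

lemma plus1_star:
  assumes nm: "\<forall>b::'a::wellorder. \<exists>y. b < y"
  shows "onf_wf (x::'a onf) \<Longrightarrow> onf_star x \<le> onf_star (onf_plus1 x)"
proof -
  assume w: "onf_wf x"
  show ?thesis
  proof (rule star_le)
    fix c assume "c \<in> onf_coeffs x"
    then obtain d where "d \<in> onf_coeffs (onf_plus1 x)" "c \<le> d" using plus1_dom[OF nm w] by blast
    then show "c \<le> onf_star (onf_plus1 x)" using star_ge order_trans by blast
  qed
qed

lemma plus1_inj:
  assumes nm: "\<forall>b::'a::wellorder. \<exists>y. b < y"
  shows "onf_wf (x::'a onf) \<Longrightarrow> onf_wf y \<Longrightarrow> onf_plus1 x = onf_plus1 y \<Longrightarrow> x = y"
proof (induction x arbitrary: y)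
  case OZ
  then show ?case
  proof (cases y)
    case (OT a b g)
    have "a = OZ" "oone = osuc b" using OZ OT by (auto split: if_splits)
    then have "b = ozero" using osuc_inj[OF nm, of ozero b] unfolding oone_def by simp
    then show ?thesis using OZ OT by simp
  qed auto
next
  case (OT a b g)
  show ?case
  proof (cases y)
    case OZ
    have "a = OZ" "oone = osuc b" using OT.prems OZ by (auto split: if_splits)
    then have "b = ozero" using osuc_inj[OF nm, of ozero b] unfolding oone_def by simp
    then show ?thesis using OT.prems by simp
  next
    case (OT a2 b2 g2)
    note y = this
    show ?thesis
    proof (cases "a = OZ")
      case True
      then have "g = OZ" using OT.prems(1) by (cases g) auto
      show ?thesis
      proof (cases "a2 = OZ")
        case True
        then have "g2 = OZ" using OT.prems(2) y by (cases g2) auto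
        have "osuc b = osuc b2" using OT.prems(3) y True \<open>a = OZ\<close> by simp
        then have "b = b2" by (rule osuc_inj[OF nm])
        then show ?thesis using y True \<open>a = OZ\<close> \<open>g = OZ\<close> \<open>g2 = OZ\<close> by simp
      next
        case False
        then show ?thesis using OT.prems y \<open>a = OZ\<close> by auto
      qed
    next
      case False
      have "a2 \<noteq> OZ" using OT.prems y False by (auto split: if_splits)
      then have "a = a2" "b = b2" "onf_plus1 g = onf_plus1 g2" using OT.prems y False by auto
      moreover have "g = g2" using OT.IH(2)[of g2] OT.prems y calculation by simp
      ultimately show ?thesis using y by simp
    qed
  qed
qed

lemma plus1_lead: "onf_plus1 (OT x y z) = OT x' y' z' \<Longrightarrow> x' = x"
  by (auto split: if_splits)

lemma plus1_wf_lead: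
  assumes h: "onf_wf (OT a b (onf_plus1 eta))" "onf_wf a" "ozero < b" "onf_wf eta"
  shows "onf_wf (OT a b eta)"
proof (cases eta)
  case OZ
  then show ?thesis using h by simp
next
  case (OT x y z)
  obtain x' y' z' where e: "onf_plus1 eta = OT x' y' z'" using OT by (cases "x = OZ") auto
  then have "x' = x" using OT plus1_lead by blast
  then have "onf_less x a" using h(1) e by simp
  then show ?thesis using h(2,3,4) OT by simp
qed

lemma limit_tail:
  assumes "onf_wf (OT a b g)" "g \<noteq> OZ" "onf_limit (OT a b g)"
  shows "onf_limit g"
proof -
  have "a \<noteq> OZ" using assms(1,2) by (cases g) auto
  show ?thesis unfolding onf_limit_def
  proof (intro conjI notI)
    show "g = OZ \<Longrightarrow> False" using assms(2) by simp
    assume "\<exists>eta. onf_wf eta \<and> g = onf_plus1 eta"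
    then obtain eta where e: "onf_wf eta" "g = onf_plus1 eta" by blast
    have w1: "onf_wf (OT a b (onf_plus1 eta))" using assms(1) e(2) by simp
    have w2: "onf_wf a" "ozero < b" using assms(1) by auto
    have "onf_wf (OT a b eta)"
      by (rule plus1_wf_lead[OF w1 w2 e(1)])
    moreover have "OT a b g = onf_plus1 (OT a b eta)" using e \<open>a \<noteq> OZ\<close> by simp
    ultimately show False using assms(3) unfolding onf_limit_def by blast
  qed
qed

lemma upper:
  assumes nm: "\<forall>b::'a::wellorder. \<exists>y. b < y"
  shows "onf_wf (xi::'a onf) \<Longrightarrow> c \<in> onf_coeffs (onf_fs xi th) \<Longrightarrow> c \<le> max (onf_star xi) th"
proof (induction xi arbitrary: c)
  case OZ
  then show ?case by (auto simp: ozero_le le_max_iff_disj)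
next
  case (OT a b g)
  let ?xi = "OT a b g"
  let ?M = "max (onf_star ?xi) th"
  have sa: "onf_star a \<le> onf_star ?xi" "onf_star g \<le> onf_star ?xi" "b \<le> onf_star ?xi"
    by (rule star_le, rule star_ge, simp)+ (rule star_ge, simp)
  have wa: "onf_wf a" "onf_wf g" "ozero < b" using OT.prems by auto
  have thM: "th \<le> ?M" by simp
  have bM: "b \<le> ?M" using sa(3) by (simp add: le_max_iff_disj)
  have ozl: "ozero \<le> ?M" by (rule ozero_le)
  have ca: "x \<le> ?M" if "x \<in> onf_coeffs a" for x
    using order_trans[OF star_ge[OF that] sa(1)] by (simp add: le_max_iff_disj)
  have cg: "x \<le> ?M" if "x \<in> onf_coeffs g" for x
    using order_trans[OF star_ge[OF that] sa(2)] by (simp add: le_max_iff_disj)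
  have fa: "x \<le> ?M" if "x \<in> onf_coeffs (onf_fs a th)" for x
  proof -
    have "x \<le> max (onf_star a) th" using OT.IH(1)[OF wa(1) that] .
    moreover have "max (onf_star a) th \<le> ?M" by (rule max.mono[OF sa(1) order_refl])
    ultimately show ?thesis by (rule order_trans)
  qed
  have fg: "x \<le> ?M" if "x \<in> onf_coeffs (onf_fs g th)" for x
  proof -
    have "x \<le> max (onf_star g) th" using OT.IH(2)[OF wa(2) that] .
    moreover have "max (onf_star g) th \<le> ?M" by (rule max.mono[OF sa(2) order_refl])
    ultimately show ?thesis by (rule order_trans)
  qed
  define pw where "pw = (if a = OZ then OZ
                else if (\<exists>a'. onf_wf a' \<and> a = onf_plus1 a')
                  then omk (THE a'. onf_wf a' \<and> a = onf_plus1 a') th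
                else OT (onf_fs a th) oone OZ)"
  have fs_eq: "onf_fs ?xi th = (if g \<noteq> OZ then OT a b (onf_fs g th)
         else if olimit b then omk a th
         else if b = oone then pw
         else OT a (THE b'. b = osuc b') pw)"
    by (simp only: onf_fs.simps Let_def pw_def)
  have pwb: "d \<le> ?M" if "d \<in> onf_coeffs pw" for d
  proof (cases "a = OZ")
    case True then show ?thesis using that ozl by (simp add: pw_def)
  next
    case False
    show ?thesis
    proof (cases "\<exists>a'. onf_wf a' \<and> a = onf_plus1 a'")
      case True
      then have ex1: "\<exists>!a'. onf_wf a' \<and> a = onf_plus1 a'" using plus1_inj[OF nm] by blast
      define a' where "a' = (THE a'. onf_wf a' \<and> a = onf_plus1 a')"
      have a': "onf_wf a'" "a = onf_plus1 a'" using theI'[OF ex1] unfolding a'_def by auto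
      have "onf_star a' \<le> onf_star ?xi" using plus1_star[OF nm a'(1)] a'(2) sa(1) by simp
      then have ca': "x \<le> ?M" if "x \<in> onf_coeffs a'" for x
        using order_trans[OF star_ge[OF that]] by (simp add: le_max_iff_disj)
      have "pw = omk a' th" using False True by (simp add: pw_def a'_def)
      then have "d \<in> onf_coeffs a' \<or> d = th \<or> d = ozero" using that
        by (auto simp: omk_def split: if_splits)
      then show ?thesis using ca' thM ozl by blast
    next
      case nt: False
      have "oone \<le> b" unfolding oone_def using wa(3) by (rule osuc_le)
      then have oM: "oone \<le> ?M" using bM by simp
      have "pw = OT (onf_fs a th) oone OZ" unfolding pw_def if_not_P[OF False] if_not_P[OF nt] by (rule refl)
      then have "d \<in> onf_coeffs (onf_fs a th) \<or> d = oone \<or> d = ozero" using that by auto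
      then show ?thesis using fa oM ozl by blast
    qed
  qed
  show ?case
  proof (cases "g \<noteq> OZ")
    case True
    then have eq: "onf_fs ?xi th = OT a b (onf_fs g th)" using fs_eq by simp
    have "c \<in> onf_coeffs a \<or> c \<in> onf_coeffs (onf_fs g th) \<or> c = b"
      using OT.prems(2) unfolding eq by auto
    then show ?thesis using ca fg bM by blast
  next
    case g0: False
    show ?thesis
    proof (cases "olimit b")
      case True
      then have eq: "onf_fs ?xi th = omk a th" using fs_eq g0 by simp
      have "c \<in> onf_coeffs a \<or> c = th \<or> c = ozero"
        using OT.prems(2) unfolding eq by (auto simp: omk_def split: if_splits)
      then show ?thesis using ca thM ozl by blast
    next
      case nl: False
      show ?thesis
      proof (cases "b = oone")
        case True
        have eq: "onf_fs ?xi th = pw" using fs_eq g0 nl True by simp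
        show ?thesis using OT.prems(2) pwb unfolding eq by blast
      next
        case False
        have "b \<noteq> ozero" using wa(3) by simp
        then obtain b' where bb: "b = osuc b'" using nl unfolding olimit_def by blast
        have ex1: "\<exists>!b'. b = osuc b'" using bb osuc_inj[OF nm] by metis
        have e: "b = osuc (THE b'. b = osuc b')" using theI'[OF ex1] .
        have "(THE b'. b = osuc b') < osuc (THE b'. b = osuc b')" using nm osuc_gt by blast
        then have "(THE b'. b = osuc b') < b" using e by simp
        then have tM: "(THE b'. b = osuc b') \<le> ?M" using bM by simp
        have "c \<in> onf_coeffs a \<or> c = (THE b'. b = osuc b') \<or> c \<in> onf_coeffs pw"
        proof -
          have eq: "onf_fs ?xi th = OT a (THE b'. b = osuc b') pw" using fs_eq g0 nl False by simp
          show ?thesis using OT.prems(2) unfolding eq by auto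
        qed
        then show ?thesis using ca tM pwb by blast
      qed
    qed
  qed
qed

lemma lower:
  shows "onf_wf (xi::'a::wellorder onf) \<Longrightarrow> onf_limit xi \<Longrightarrow> th = ozero \<or> th \<in> onf_coeffs (onf_fs xi th)"
proof (induction xi)
  case OZ
  then show ?case by (simp add: onf_limit_def)
next
  case (OT a b g)
  have wa: "onf_wf a" "onf_wf g" "ozero < b" using OT.prems by auto
  define pw where "pw = (if a = OZ then OZ
                else if (\<exists>a'. onf_wf a' \<and> a = onf_plus1 a')
                  then omk (THE a'. onf_wf a' \<and> a = onf_plus1 a') th
                else OT (onf_fs a th) oone OZ)"
  have pwb: "th = ozero \<or> th \<in> onf_coeffs pw" if "a \<noteq> OZ"
  proof (cases "\<exists>a'. onf_wf a' \<and> a = onf_plus1 a'")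
    case True then show ?thesis using that by (auto simp: pw_def omk_def)
  next
    case False
    then have "onf_limit a" using that unfolding onf_limit_def by blast
    then show ?thesis using OT.IH(1)[OF wa(1)] that False by (auto simp: pw_def)
  qed
  show ?case
  proof (cases "g \<noteq> OZ")
    case True
    then show ?thesis using OT.IH(2)[OF wa(2) limit_tail[OF OT.prems(1) True OT.prems(2)]] by auto
  next
    case g0: False
    show ?thesis
    proof (cases "olimit b")
      case True
      then show ?thesis using g0 by (auto simp: omk_def)
    next
      case nl: False
      have aZ: "a \<noteq> OZ"
      proof
        assume a0: "a = OZ"
        have "b \<noteq> ozero" using wa(3) by simp
        then obtain b' where bb: "b = osuc b'" using nl unfolding olimit_def by blast
        show False
        proof (cases "b' = ozero")
          case True
          then have "OT a b g = onf_plus1 OZ" using a0 g0 bb by (simp add: oone_def)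
          then show False using OT.prems(2) onf_wf.simps(1) unfolding onf_limit_def by blast
        next
          case False
          then have "ozero < b'" using ozero_le order_le_neq_trans by metis
          then have "onf_wf (OT OZ b' OZ)" by simp
          moreover have "OT a b g = onf_plus1 (OT OZ b' OZ)" using a0 g0 bb by simp
          ultimately show False using OT.prems(2) unfolding onf_limit_def by blast
        qed
      qed
      show ?thesis using pwb[OF aZ] g0 nl by (auto simp: pw_def[symmetric] Let_def)
    qed
  qed
qed

theorem lemma2p2:
  fixes xi :: "'a::wellorder onf" and th :: 'a
  assumes "\<not> countable (UNIV :: 'a set)"
    and "\<And>b::'a. countable {x. x < b}"
    and "onf_wf xi"
    and "onf_limit xi"
  shows "th \<le> onf_star (onf_fs xi th) \<and> onf_star (onf_fs xi th) \<le> max (onf_star xi) th"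
proof -
  have nm: "\<forall>b::'a. \<exists>y. b < y"
  proof
    fix b :: 'a
    show "\<exists>y. b < y"
    proof (rule ccontr)
      assume "\<not> (\<exists>y. b < y)"
      then have "UNIV = insert b {x. x < b}" by (auto simp: not_less) (meson antisym_conv1 not_less)
      then have "countable (UNIV :: 'a set)" using assms(2)[of b] by (metis countable_insert)
      then show False using assms(1) by simp
    qed
  qed
  have "th \<le> onf_star (onf_fs xi th)"
    using lower[OF assms(3,4), of th] by (auto simp: ozero_le star_ge)
  moreover have "onf_star (onf_fs xi th) \<le> max (onf_star xi) th"
    by (rule star_le) (rule upper[OF nm assms(3)])
  ultimately show ?thesis by simp
qed

end
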